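(* Let $R$ be a ring and $\mathfrak p\subset R$ a prime ideal. If $R$ is purely $F$-regular along $\mathfrak p$, then the polynomial ring $R[t]$ is purely $F$-regular along the prime ideal $\mathfrak p[t]=\mathfrak pR[t]$.
   Context: All rings are noetherian $F$-finite commutative $\mathbb F_p$-algebras. $F^e_*R$ is $R$ viewed as an $R$-module via $r\mapsto r^{p^e}$; $\mathcal C_{e,R}=\operatorname{Hom}_R(F^e_*R,R)$. For an ideal $\mathfrak a$, $\phi\in\mathcal C_{e,R}$ is $\mathfrak a$-compatible if $\phi(F^e_*\mathfrak a)\subseteq\mathfrak a$. For a prime $\mathfrak p\subset R$, $R$ is purely $F$-regular along $\mathfrak p$ if (i) there exist $e>0$ and a $\mathfrak p$-compatible $\phi\in\mathcal C_{e,R}$ with $\phi(F^e_*R)\not\subseteq\mathfrak p$, and (ii) every proper ideal $\mathfrak b\subsetneq R$ that is $\phi$-compatible for every $e>0$ and every $\mathfrak p$-compatible $\phi\in\mathcal C_{e,R}$ satisfies $\mathfrak b\subseteq\mathfrak p$. *)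

theory Defs
  imports "HOL-Computational_Algebra.Polynomial"
begin

text \<open>Ideals of a commutative ring (type-class idiom: the ring is the whole type).\<close>
definition is_ideal :: "'a::comm_ring_1 set \<Rightarrow> bool" where
  "is_ideal I \<longleftrightarrow> 0 \<in> I \<and> (\<forall>x\<in>I. \<forall>y\<in>I. x + y \<in> I) \<and> (\<forall>r x. x \<in> I \<longrightarrow> r * x \<in> I)"

definition is_prime_ideal :: "'a::comm_ring_1 set \<Rightarrow> bool" where
  "is_prime_ideal P \<longleftrightarrow> is_ideal P \<and> P \<noteq> UNIV \<and> (\<forall>x y. x * y \<in> P \<longrightarrow> x \<in> P \<or> y \<in> P)"

definition noetherian_ring :: "'a::comm_ring_1 itself \<Rightarrow> bool" where
  "noetherian_ring _ \<longleftrightarrow> (\<forall>f :: nat \<Rightarrow> 'a set. (\<forall>n. is_ideal (f n)) \<and> (\<forall>n. f n \<subseteq> f (Suc n))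
      \<longrightarrow> (\<exists>N. \<forall>n\<ge>N. f n = f N))"

text \<open>F-finite: F_*R is a finitely generated R-module, i.e. there is a finite set S with
  every x of the form sum over s in S of r_s^p * s.\<close>
definition F_finite :: "nat \<Rightarrow> 'a::comm_ring_1 itself \<Rightarrow> bool" where
  "F_finite p _ \<longleftrightarrow> (\<exists>S :: 'a set. finite S \<and> (\<forall>x. \<exists>c. x = (\<Sum>s\<in>S. c s ^ p * s)))"

text \<open>Elements of C_{e,R} = Hom_R(F^e_*R, R): additive maps phi with
  phi(r^(p^e) x) = r phi(x).\<close>
definition cartier_map :: "nat \<Rightarrow> nat \<Rightarrow> ('a::comm_ring_1 \<Rightarrow> 'a) \<Rightarrow> bool" where
  "cartier_map p e \<phi> \<longleftrightarrow> (\<forall>x y. \<phi> (x + y) = \<phi> x + \<phi> y) \<and> (\<forall>r x. \<phi> (r ^ (p ^ e) * x) = r * \<phi> x)"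

definition compatible :: "('a \<Rightarrow> 'a) \<Rightarrow> 'a set \<Rightarrow> bool" where
  "compatible \<phi> I \<longleftrightarrow> \<phi> ` I \<subseteq> I"

definition purely_F_regular_along :: "nat \<Rightarrow> 'a::comm_ring_1 set \<Rightarrow> bool" where
  "purely_F_regular_along p P \<longleftrightarrow>
     (\<exists>e>0. \<exists>\<phi>. cartier_map p e \<phi> \<and> compatible \<phi> P \<and> \<not> (range \<phi> \<subseteq> P)) \<and>
     (\<forall>B. is_ideal B \<and> B \<noteq> UNIV \<and>
          (\<forall>e>0. \<forall>\<phi>. cartier_map p e \<phi> \<and> compatible \<phi> P \<longrightarrow> compatible \<phi> B)
          \<longrightarrow> B \<subseteq> P)"

text \<open>The extended ideal P[t] = P R[t]: polynomials all of whose coefficients lie in P.\<close>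
definition poly_ext_ideal :: "'a::comm_ring_1 set \<Rightarrow> 'a poly set" where
  "poly_ext_ideal P = {f. \<forall>i. coeff f i \<in> P}"

end

theory Submission
  imports Defs "HOL-Computational_Algebra.Primes"
begin

lemma fd:
  fixes x y :: "'b::comm_ring_1"
  assumes "prime p" "of_nat p = (0::'b)"
  shows "(x + y) ^ p = x ^ p + y ^ p"
proof -
  have pp: "p > 0" using assms(1) prime_gt_0_nat by blast
  have "(x + y) ^ p = (\<Sum>k\<le>p. of_nat (p choose k) * x ^ k * y ^ (p - k))"
    by (rule binomial_ring)
  also have "\<dots> = (\<Sum>k\<in>{0,p}. of_nat (p choose k) * x ^ k * y ^ (p - k))"
  proof (intro sum.mono_neutral_right ballI)
    fix k assume "k \<in> {..p} - {0, p}"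
    hence k: "k > 0" "k < p" by auto
    have "p dvd (p choose k)"
      by (rule dvd_choose_prime) (use k assms in auto)
    then obtain m where "p choose k = p * m" by blast
    hence "of_nat (p choose k) = (0 :: 'b)" using assms(2) by simp
    thus "of_nat (p choose k) * x ^ k * y ^ (p - k) = 0" by simp
  qed auto
  finally show ?thesis using pp by (simp add: add_ac)
qed

lemma fd':
  fixes x y :: "'b::comm_ring_1"
  assumes "prime p" "of_nat p = (0::'b)"
  shows "(x + y) ^ (p ^ e) = x ^ (p ^ e) + y ^ (p ^ e)"
proof (induction e)
  case (Suc e)
  have "(x + y) ^ (p ^ Suc e) = ((x + y) ^ (p ^ e)) ^ p"
    by (simp add: power_mult[symmetric] mult.commute)
  also have "\<dots> = (x ^ (p ^ e)) ^ p + (y ^ (p ^ e)) ^ p"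
    using Suc fd[OF assms] by simp
  finally show ?case by (simp add: power_mult[symmetric] mult.commute)
qed simp

definition Psi :: "nat \<Rightarrow> nat \<Rightarrow> ('a::comm_ring_1 \<Rightarrow> 'a) \<Rightarrow> 'a poly \<Rightarrow> 'a poly" where
  "Psi q m \<phi> f = (\<Sum>j\<le>degree f. monom (\<phi> (coeff f (j*q+m))) j)"

lemma coeff_Psi:
  assumes "\<phi> 0 = 0" "q \<ge> 1"
  shows "coeff (Psi q m \<phi> f) j = \<phi> (coeff f (j*q+m))"
proof (cases "j \<le> degree f")
  case True
  then show ?thesis unfolding Psi_def coeff_sum by (simp add: sum.delta)
next
  case False
  have "j*q+m \<ge> j" using assms(2) by (metis le_add1 mult_le_mono2 mult.right_neutral order_trans)
  hence "coeff f (j*q+m) = 0" using False by (intro coeff_eq_0) simp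
  then show ?thesis using False assms(1) unfolding Psi_def coeff_sum by (simp add: sum.delta)
qed

lemma cartier_zero: "cartier_map p e \<phi> \<Longrightarrow> \<phi> 0 = 0"
  unfolding cartier_map_def by (metis add_cancel_right_right add_0)

lemma Psi_add:
  assumes "cartier_map p e \<phi>" "q \<ge> 1"
  shows "Psi q m \<phi> (f + g) = Psi q m \<phi> f + Psi q m \<phi> g"
  using assms cartier_zero[OF assms(1)]
  by (simp add: poly_eq_iff coeff_Psi cartier_map_def)

lemma Psi_const:
  assumes "cartier_map p e \<phi>" "q = p ^ e" and q: "q \<ge> 1"
  shows "Psi q m \<phi> (smult (a ^ q) f) = smult a (Psi q m \<phi> f)"
proof -
  show ?thesis using assms cartier_zero[OF assms(1)] q
    by (simp add: poly_eq_iff coeff_Psi cartier_map_def)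
qed

lemma Psi_shift:
  assumes "\<phi> 0 = 0" "q \<ge> 1" "m < q"
  shows "Psi q m \<phi> (monom 1 q * h) = monom 1 1 * Psi q m \<phi> h"
proof (rule poly_eqI)
  fix j
  show "coeff (Psi q m \<phi> (monom 1 q * h)) j = coeff (monom 1 1 * Psi q m \<phi> h) j"
  proof (cases j)
    case 0
    then show ?thesis using assms by (simp add: coeff_Psi coeff_monom_mult)
  next
    case (Suc j')
    have "Suc j' * q + m - q = j' * q + m" by simp
    then show ?thesis using assms Suc by (simp add: coeff_Psi coeff_monom_mult)
  qed
qed

lemma pCons_split: "pCons (a::'a::comm_ring_1) r = [:a:] + monom 1 1 * r"
  by (simp add: poly_eq_iff coeff_monom_mult coeff_pCons')

lemma const_mult: "smult a f = [:a::'a::comm_ring_1:] * f"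
  by simp

lemma const_power: "[:a::'a::comm_ring_1:] ^ n = [:a ^ n:]"
  by (induction n) (simp_all add: mult.commute)

lemma Psi_cartier:
  assumes "prime p" "of_nat p = (0::'a::comm_ring_1)" "cartier_map p e \<phi>" "m < p ^ e"
  shows "cartier_map p e (Psi (p ^ e) m (\<phi> :: 'a \<Rightarrow> 'a))"
proof -
  define q where "q = p ^ e"
  have q1: "q \<ge> 1" unfolding q_def using assms(1) prime_gt_0_nat
    by (simp add: Suc_leI)
  have z: "\<phi> 0 = 0" using cartier_zero[OF assms(3)] .
  have mq: "m < q" using assms(4) q_def by simp
  have p0: "of_nat p = (0::'a poly)" using assms(2) by (simp add: of_nat_poly)
  have mul: "Psi q m \<phi> (r ^ q * x) = r * Psi q m \<phi> x" for r x
  proof (induction r)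
    case 0
    have "Psi q m \<phi> 0 = 0" using z q1 by (simp add: poly_eq_iff coeff_Psi)
    then show ?case using q1 by (simp add: power_0_left)
  next
    case (pCons a r)
    have "(pCons a r) ^ q = [:a:] ^ q + (monom 1 1 * r) ^ q"
      unfolding pCons_split[of a r] q_def by (rule fd'[OF assms(1) p0])
    also have "\<dots> = [:a ^ q:] + monom 1 q * r ^ q"
      by (simp add: const_power power_mult_distrib monom_power)
    finally have "(pCons a r) ^ q * x = smult (a ^ q) x + monom 1 q * (r ^ q * x)"
      by (simp only: distrib_right mult.assoc const_mult)
    hence "Psi q m \<phi> ((pCons a r) ^ q * x) = smult a (Psi q m \<phi> x) + monom 1 1 * (r * Psi q m \<phi> x)"
      using Psi_add[OF assms(3) q1] Psi_const[OF assms(3) q_def q1] Psi_shift[where \<phi>=\<phi>, OF z q1 mq] pCons.IH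
      by (simp only:)
    also have "\<dots> = pCons a r * Psi q m \<phi> x"
      by (simp only: pCons_split[of a r] distrib_right mult.assoc const_mult)
    finally show ?case .
  qed
  show ?thesis unfolding cartier_map_def q_def[symmetric]
    using Psi_add[OF assms(3) q1] mul by blast
qed

lemma cartier_comp:
  assumes "cartier_map p e1 \<phi>1" "cartier_map p e2 \<phi>2"
  shows "cartier_map p (e2 + e1) (\<phi>1 \<circ> \<phi>2)"
proof -
  have "(\<phi>1 \<circ> \<phi>2) (r ^ (p ^ (e2 + e1)) * x) = r * (\<phi>1 \<circ> \<phi>2) x" for r x
  proof -
    have "r ^ (p ^ (e2 + e1)) = (r ^ (p ^ e1)) ^ (p ^ e2)"
      by (simp add: power_add power_mult[symmetric] mult.commute)
    thus ?thesis using assms unfolding cartier_map_def by simp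
  qed
  thus ?thesis using assms unfolding cartier_map_def by simp
qed

lemma cartier_funpow:
  assumes "cartier_map p e \<phi>"
  shows "cartier_map p (k * e) (\<phi> ^^ k)"
proof (induction k)
  case 0
  then show ?case by (simp add: cartier_map_def)
next
  case (Suc k)
  have "cartier_map p (e + k * e) (\<phi> ^^ k \<circ> \<phi>)"
    by (rule cartier_comp[OF Suc assms])
  moreover have "\<phi> ^^ Suc k = \<phi> ^^ k \<circ> \<phi>" by (rule funpow_Suc_right)
  ultimately show ?case by (simp only: mult_Suc)
qed

lemma cartier_mult:
  assumes "cartier_map p e \<phi>"
  shows "cartier_map p e (\<lambda>x. \<phi> (c * x))"
proof -
  have "\<phi> (c * (r ^ p ^ e * x)) = r * \<phi> (c * x)" for r x
  proof -
    have "c * (r ^ p ^ e * x) = r ^ p ^ e * (c * x)" by (simp add: mult.left_commute)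
    moreover have "\<phi> (r ^ p ^ e * (c * x)) = r * \<phi> (c * x)"
      using assms unfolding cartier_map_def by blast
    ultimately show ?thesis by metis
  qed
  thus ?thesis using assms unfolding cartier_map_def by (simp add: distrib_left)
qed

lemma ideal_mult: "is_ideal I \<Longrightarrow> x \<in> I \<Longrightarrow> r * x \<in> I"
  unfolding is_ideal_def by blast
lemma ideal_mult2: "is_ideal I \<Longrightarrow> x \<in> I \<Longrightarrow> x * r \<in> I"
  unfolding is_ideal_def by (metis mult.commute)
lemma ideal_add: "is_ideal I \<Longrightarrow> x \<in> I \<Longrightarrow> y \<in> I \<Longrightarrow> x + y \<in> I"
  unfolding is_ideal_def by blast
lemma ideal_0: "is_ideal I \<Longrightarrow> 0 \<in> I"
  unfolding is_ideal_def by blast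
lemma ideal_diff: "is_ideal I \<Longrightarrow> x \<in> I \<Longrightarrow> y \<in> I \<Longrightarrow> x - y \<in> I"
  using ideal_add[of I x "(-1) * y"] ideal_mult[of I y "-1"] by simp
lemma ideal_sum: "is_ideal I \<Longrightarrow> (\<And>i. i \<in> A \<Longrightarrow> f i \<in> I) \<Longrightarrow> sum f A \<in> I"
  by (induction A rule: infinite_finite_induct) (auto intro: ideal_0 ideal_add)
lemma ideal_one: "is_ideal I \<Longrightarrow> 1 \<in> I \<Longrightarrow> I = UNIV"
  using ideal_mult[of I 1] by auto

lemma compat_comp: "compatible f I \<Longrightarrow> compatible g I \<Longrightarrow> compatible (f \<circ> g) I"
  unfolding compatible_def by auto
lemma compat_funpow: "compatible f I \<Longrightarrow> compatible (f ^^ k) I"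
  by (induction k) (auto simp: compatible_def)
lemma compat_mult: "is_ideal I \<Longrightarrow> compatible f I \<Longrightarrow> compatible (\<lambda>x. f (c * x)) I"
  unfolding compatible_def using ideal_mult by blast

lemma funpow_nonvanish:
  assumes "cartier_map p e \<phi>" "is_prime_ideal P" "\<phi> c \<notin> P" "prime p"
  shows "\<exists>x. (\<phi> ^^ k) x \<notin> P"
proof (induction k)
  case 0
  have "(1::'a) \<notin> P" using assms(2) ideal_one unfolding is_prime_ideal_def by blast
  then show ?case by auto
next
  case (Suc k)
  then obtain x where x: "(\<phi> ^^ k) x \<notin> P" by blast
  define Q where "Q = p ^ (k * e)"
  have Q1: "Q \<ge> 1" unfolding Q_def using assms(4) prime_gt_0_nat by (simp add: Suc_leI)
  define u where "u = \<phi> c"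
  have ck: "cartier_map p (k * e) (\<phi> ^^ k)" by (rule cartier_funpow[OF assms(1)])
  have "\<phi> ((u ^ (Q - 1) * x) ^ (p ^ e) * c) = u ^ (Q - 1) * x * u"
    using assms(1) unfolding cartier_map_def u_def by simp
  also have "\<dots> = u ^ Q * x"
  proof -
    have "u ^ (Q - 1) * u = u ^ Q" using Q1 by (metis Suc_diff_1 le_numeral_extra(2) less_le_trans power_Suc2 zero_less_one)
    thus ?thesis by (metis mult.assoc mult.commute)
  qed
  finally have "(\<phi> ^^ Suc k) ((u ^ (Q - 1) * x) ^ (p ^ e) * c) = (\<phi> ^^ k) (u ^ Q * x)"
    by (simp only: funpow_Suc_right comp_apply)
  also have "\<dots> = u * (\<phi> ^^ k) x" using ck unfolding cartier_map_def Q_def by simp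
  finally have eq: "(\<phi> ^^ Suc k) ((u ^ (Q - 1) * x) ^ (p ^ e) * c) = u * (\<phi> ^^ k) x" .
  have "u * (\<phi> ^^ k) x \<notin> P" using x assms(2,3) unfolding is_prime_ideal_def u_def by blast
  then show ?case using eq by metis
qed

lemma ext_ideal:
  assumes "is_ideal P"
  shows "is_ideal (poly_ext_ideal P)"
  unfolding is_ideal_def poly_ext_ideal_def
proof (intro conjI ballI allI impI)
  show "0 \<in> {f. \<forall>i. coeff f i \<in> P}" using ideal_0[OF assms] by simp
next
  fix x y assume "x \<in> {f. \<forall>i. coeff f i \<in> P}" "y \<in> {f. \<forall>i. coeff f i \<in> P}"
  thus "x + y \<in> {f. \<forall>i. coeff f i \<in> P}" using ideal_add[OF assms] by simp
next
  fix r x assume "x \<in> {f. \<forall>i. coeff f i \<in> P}"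
  hence "coeff (r * x) i \<in> P" for i
    by (simp only: coeff_mult) (auto intro!: ideal_sum[OF assms] ideal_mult[OF assms])
  thus "r * x \<in> {f. \<forall>i. coeff f i \<in> P}" by simp
qed

lemma ext_prime:
  assumes "is_prime_ideal P"
  shows "is_prime_ideal (poly_ext_ideal P)"
proof -
  have I: "is_ideal P" using assms unfolding is_prime_ideal_def by blast
  have one: "(1::'a) \<notin> P" using assms ideal_one unfolding is_prime_ideal_def by blast
  have pr: "\<And>x y. x * y \<in> P \<Longrightarrow> x \<in> P \<or> y \<in> P" using assms unfolding is_prime_ideal_def by blast
  have "poly_ext_ideal P \<noteq> UNIV"
  proof
    assume "poly_ext_ideal P = UNIV"
    hence "coeff (1::'a poly) 0 \<in> P" unfolding poly_ext_ideal_def by blast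
    thus False using one by simp
  qed
  moreover have "f \<in> poly_ext_ideal P \<or> g \<in> poly_ext_ideal P" if fg: "f * g \<in> poly_ext_ideal P" for f g
  proof (rule ccontr)
    assume "\<not> ?thesis"
    then obtain i0 j0 where "coeff f i0 \<notin> P" "coeff g j0 \<notin> P" unfolding poly_ext_ideal_def by blast
    define i where "i = (LEAST i. coeff f i \<notin> P)"
    define j where "j = (LEAST j. coeff g j \<notin> P)"
    have fi: "coeff f i \<notin> P" unfolding i_def by (rule LeastI) fact
    have gj: "coeff g j \<notin> P" unfolding j_def by (rule LeastI) fact
    have fk: "coeff f k \<in> P" if "k < i" for k using not_less_Least[of k "\<lambda>i. coeff f i \<notin> P"] that unfolding i_def by simp
    have gk: "coeff g k \<in> P" if "k < j" for k using not_less_Least[of k "\<lambda>i. coeff g i \<notin> P"] that unfolding j_def by simp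
    define S where "S = (\<Sum>k\<in>{..i+j} - {i}. coeff f k * coeff g (i + j - k))"
    have "coeff (f * g) (i + j) = coeff f i * coeff g (i + j - i) + S"
      unfolding coeff_mult S_def by (rule sum.remove) auto
    hence eq: "coeff f i * coeff g j = coeff (f * g) (i + j) - S" by simp
    have "S \<in> P" unfolding S_def
    proof (rule ideal_sum[OF I])
      fix k assume "k \<in> {..i+j} - {i}"
      hence "k < i \<or> (k > i \<and> i + j - k < j)" by auto
      thus "coeff f k * coeff g (i + j - k) \<in> P"
      proof
        assume "k < i" thus ?thesis using fk ideal_mult2[OF I] by simp
      next
        assume "i < k \<and> i + j - k < j" thus ?thesis using gk ideal_mult[OF I] by simp
      qed
    qed
    moreover have "coeff (f * g) (i + j) \<in> P" using fg unfolding poly_ext_ideal_def by blast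
    ultimately have "coeff f i * coeff g j \<in> P" unfolding eq by (metis ideal_diff[OF I])
    thus False using pr fi gj by blast
  qed
  ultimately show ?thesis using ext_ideal[OF I] unfolding is_prime_ideal_def by blast
qed

lemma Psi_compat:
  assumes "compatible \<phi> P" "\<phi> 0 = 0" "q \<ge> 1"
  shows "compatible (Psi q m \<phi>) (poly_ext_ideal P)"
  using assms unfolding compatible_def poly_ext_ideal_def by (auto simp: coeff_Psi)

lemma Psi_const_poly:
  assumes "\<phi> 0 = 0" "q \<ge> 1"
  shows "Psi q 0 \<phi> [:a:] = [:\<phi> a:]"
proof (rule poly_eqI)
  fix j show "coeff (Psi q 0 \<phi> [:a:]) j = coeff [:\<phi> a:] j"
  proof (cases j)
    case 0 then show ?thesis using assms by (simp add: coeff_Psi)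
  next
    case (Suc j')
    have "Suc j' * q + 0 \<noteq> 0" using assms(2) by simp
    then show ?thesis using assms Suc by (simp add: coeff_Psi coeff_pCons')
  qed
qed

lemma pow_big:
  assumes "p \<ge> 2" "e0 > 0"
  shows "(d::nat) < p ^ (Suc d * e0)"
proof -
  have "d < Suc d" by simp
  also have "Suc d < 2 ^ Suc d" by (rule less_exp)
  also have "(2::nat) ^ Suc d \<le> p ^ Suc d" using assms(1) by (rule power_mono) simp
  also have "p ^ Suc d \<le> p ^ (Suc d * e0)"
  proof (rule power_increasing)
    have "Suc d * 1 \<le> Suc d * e0" using assms(2) by (intro mult_le_mono2) simp
    thus "Suc d \<le> Suc d * e0" by simp
  qed (use assms in simp)
  finally show ?thesis .
qed

theorem proposition2p15:
  fixes p :: nat and P :: "'a::comm_ring_1 set"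
  assumes "prime p" and "of_nat p = (0::'a)"
    and "noetherian_ring TYPE('a)" and "F_finite p TYPE('a)"
    and "is_prime_ideal P"
    and "purely_F_regular_along p P"
  shows "is_prime_ideal (poly_ext_ideal P) \<and> purely_F_regular_along p (poly_ext_ideal P)"
proof -
  have I: "is_ideal P" using assms(5) unfolding is_prime_ideal_def by blast
  have pr: "\<And>x y. x * y \<in> P \<Longrightarrow> x \<in> P \<or> y \<in> P" using assms(5) unfolding is_prime_ideal_def by blast
  have p2: "p \<ge> 2" using assms(1) prime_ge_2_nat by blast
  have q1: "\<And>e. p ^ e \<ge> 1" by (rule one_le_power) (use p2 in simp)
  have ex: "\<exists>e>0. \<exists>\<phi>. cartier_map p e \<phi> \<and> compatible \<phi> P \<and> \<not> (range \<phi> \<subseteq> P)"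
    using assms(6) unfolding purely_F_regular_along_def by (rule conjunct1)
  then obtain e0 \<phi>0 where e0: "e0 > 0" "cartier_map p e0 \<phi>0" "compatible \<phi>0 P" "\<not> range \<phi>0 \<subseteq> P"
    by blast
  have HH: "\<forall>B. is_ideal B \<and> B \<noteq> UNIV \<and>
          (\<forall>e>0. \<forall>\<phi>. cartier_map p e \<phi> \<and> compatible \<phi> P \<longrightarrow> compatible \<phi> B) \<longrightarrow> B \<subseteq> P"
    using assms(6) unfolding purely_F_regular_along_def by (rule conjunct2)
  have H: "\<And>B. is_ideal B \<Longrightarrow> B \<noteq> UNIV \<Longrightarrow>
          (\<forall>e>0. \<forall>\<phi>. cartier_map p e \<phi> \<and> compatible \<phi> P \<longrightarrow> compatible \<phi> B) \<Longrightarrow> B \<subseteq> P"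
    using HH by blast
  obtain c0 where c0: "\<phi>0 c0 \<notin> P" using e0(4) by blast
  have z0: "\<phi>0 0 = 0" using cartier_zero[OF e0(2)] .
  have part1: "\<exists>e>0. \<exists>\<Phi>. cartier_map p e \<Phi> \<and> compatible \<Phi> (poly_ext_ideal P) \<and> \<not> range \<Phi> \<subseteq> poly_ext_ideal P"
  proof (intro exI conjI)
    show "cartier_map p e0 (Psi (p ^ e0) 0 \<phi>0)"
      by (rule Psi_cartier[OF assms(1,2) e0(2)]) (use p2 in simp)
    show "compatible (Psi (p ^ e0) 0 \<phi>0) (poly_ext_ideal P)"
      by (rule Psi_compat[OF e0(3) z0 q1])
    have "Psi (p ^ e0) 0 \<phi>0 [:c0:] \<notin> poly_ext_ideal P"
      using c0 unfolding Psi_const_poly[where \<phi>=\<phi>0, OF z0 q1[of e0]] poly_ext_ideal_def by (auto intro!: exI[of _ 0])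
    thus "\<not> range (Psi (p ^ e0) 0 \<phi>0) \<subseteq> poly_ext_ideal P" by blast
  qed (rule e0(1))
  have part2: "B \<subseteq> poly_ext_ideal P"
    if B: "is_ideal B" "B \<noteq> UNIV"
      and HB: "\<forall>e>0. \<forall>\<Phi>. cartier_map p e \<Phi> \<and> compatible \<Phi> (poly_ext_ideal P) \<longrightarrow> compatible \<Phi> B"
    for B :: "'a poly set"
  proof -
    have lift: "Psi (p ^ e) m \<phi> g \<in> B"
      if "e > 0" "cartier_map p e \<phi>" "compatible \<phi> P" "m < p ^ e" "g \<in> B" for e m \<phi> g
    proof -
      have "cartier_map p e (Psi (p ^ e) m \<phi>)" by (rule Psi_cartier[OF assms(1,2) that(2,4)])
      moreover have "compatible (Psi (p ^ e) m \<phi>) (poly_ext_ideal P)"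
        by (rule Psi_compat[OF that(3) cartier_zero[OF that(2)] q1])
      ultimately have "compatible (Psi (p ^ e) m \<phi>) B" using HB that(1) by blast
      thus ?thesis using that(5) unfolding compatible_def by blast
    qed
    define b where "b = {a. [:a:] \<in> B}"
    have bI: "is_ideal b" unfolding is_ideal_def b_def
    proof (intro conjI ballI allI impI)
      show "0 \<in> {a. [:a:] \<in> B}" using ideal_0[OF B(1)] by simp
    next
      fix x y assume "x \<in> {a. [:a:] \<in> B}" "y \<in> {a. [:a:] \<in> B}"
      hence "[:x:] + [:y:] \<in> B" using ideal_add[OF B(1)] by blast
      thus "x + y \<in> {a. [:a:] \<in> B}" by simp
    next
      fix r x assume "x \<in> {a. [:a:] \<in> B}"
      hence "[:r:] * [:x:] \<in> B" using ideal_mult[OF B(1)] by blast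
      thus "r * x \<in> {a. [:a:] \<in> B}" by (simp add: mult.commute)
    qed
    have bU: "b \<noteq> UNIV"
    proof
      assume "b = UNIV"
      hence "(1::'a poly) \<in> B" unfolding b_def by (metis UNIV_I mem_Collect_eq one_pCons)
      thus False using ideal_one[OF B(1)] B(2) by blast
    qed
    have bc: "compatible \<phi> b" if "e > 0" "cartier_map p e \<phi>" "compatible \<phi> P" for e \<phi>
      unfolding compatible_def
    proof
      fix y assume "y \<in> \<phi> ` b"
      then obtain a where a: "a \<in> b" "y = \<phi> a" by blast
      have "Psi (p ^ e) 0 \<phi> [:a:] \<in> B"
        using lift[OF that, of 0 "[:a:]"] a p2 unfolding b_def by simp
      thus "y \<in> b" unfolding Psi_const_poly[where \<phi>=\<phi>, OF cartier_zero[OF that(2)] q1[of e]] b_def a by simp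
    qed
    have bP: "b \<subseteq> P" using H[OF bI bU] bc by blast
    show ?thesis
    proof
      fix f assume fB: "f \<in> B"
      show "f \<in> poly_ext_ideal P" unfolding poly_ext_ideal_def
      proof (intro CollectI allI)
        fix n show "coeff f n \<in> P"
        proof (rule ccontr)
        assume an: "coeff f n \<notin> P"
        define a where "a = coeff f n"
        have nd: "n \<le> degree f" using an ideal_0[OF I] coeff_eq_0[of f n] by (cases "n \<le> degree f") auto
        define k where "k = Suc (degree f)"
        define E where "E = k * e0"
        define Q where "Q = p ^ E"
        have QD: "degree f < Q" unfolding Q_def E_def k_def by (rule pow_big[OF p2 e0(1)])
        have Q1: "Q \<ge> 1" unfolding Q_def by (rule q1)
        have E0: "E > 0" unfolding E_def k_def using e0(1) by simp
        have cE: "cartier_map p E (\<phi>0 ^^ k)" unfolding E_def by (rule cartier_funpow[OF e0(2)])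
        have cP: "compatible (\<phi>0 ^^ k) P" by (rule compat_funpow[OF e0(3)])
        obtain x where x: "(\<phi>0 ^^ k) x \<notin> P" using funpow_nonvanish[OF e0(2) assms(5) c0 assms(1)] by blast
        define \<phi> where "\<phi> = (\<lambda>y. (\<phi>0 ^^ k) (a ^ (Q - 1) * x * y))"
        have c\<phi>: "cartier_map p E \<phi>" unfolding \<phi>_def by (rule cartier_mult[OF cE])
        have p\<phi>: "compatible \<phi> P" unfolding \<phi>_def by (rule compat_mult[OF I cP])
        have z\<phi>: "\<phi> 0 = 0" by (rule cartier_zero[OF c\<phi>])
        have gB: "Psi Q n \<phi> f \<in> B" unfolding Q_def
          by (rule lift[OF E0 c\<phi> p\<phi> _ fB]) (use nd QD Q_def in auto)
        have "Psi Q n \<phi> f = [:\<phi> a:]"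
        proof (rule poly_eqI)
          fix j show "coeff (Psi Q n \<phi> f) j = coeff [:\<phi> a:] j"
          proof (cases j)
            case 0 then show ?thesis using z\<phi> Q1 by (simp add: coeff_Psi a_def)
          next
            case (Suc j')
            have "Suc j' * Q + n \<ge> Q" by simp
            hence "coeff f (Suc j' * Q + n) = 0" using QD by (intro coeff_eq_0) simp
            then show ?thesis using z\<phi> Q1 Suc by (simp add: coeff_Psi coeff_pCons')
          qed
        qed
        hence "\<phi> a \<in> b" using gB unfolding b_def by simp
        hence inP: "\<phi> a \<in> P" using bP by blast
        have "a ^ (Q - 1) * x * a = a ^ Q * x"
        proof -
          have "a ^ (Q - 1) * a = a ^ Q" using Q1
            by (metis Suc_diff_1 le_numeral_extra(2) less_le_trans power_Suc2 zero_less_one)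
          thus ?thesis by (metis mult.assoc mult.commute)
        qed
        hence "\<phi> a = a * (\<phi>0 ^^ k) x" using cE unfolding \<phi>_def Q_def cartier_map_def by simp
        moreover have "a * (\<phi>0 ^^ k) x \<notin> P" using pr an x unfolding a_def by blast
        ultimately show False using inP by simp
      qed
      qed
    qed
  qed
  show ?thesis
    using ext_prime[OF assms(5)] part1 part2 unfolding purely_F_regular_along_def by blast
qed

end
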